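(* Let $E$ be the $k$-algebra generated by $t,w$ with relations $t^2=-t$ and $w^2=1$. Then the $k$-algebra homomorphism $E\to M_2(k[X])$ given by $$w\mapsto\begin{pmatrix}X&X^2-1\\-1&-X\end{pmatrix},\qquad t\mapsto\begin{pmatrix}0&0\\0&-1\end{pmatrix}$$ is injective, and it maps the centre $Z(E)$ isomorphically onto the scalar matrices $k[X]\cdot\mathrm{Id}$; in particular $Z(E)\cong k[X]$.
   Context: $k=\overline{\mathbb F}_p$. For a non-regular character $\xi$ of the finite torus $T(\mathbb F_q)$ of $\mathrm{PGL}_2$ (i.e. $\xi(\mathrm{diag}(a,b))=\xi(\mathrm{diag}(b,a))$), the block $e_\xi\mathcal H_{\mathrm{PGL}_2}$ of the pro-$p$ Iwahori–Hecke algebra of $\mathrm{PGL}_2(\mathfrak F)$ is isomorphic to $E$ via $t=e_\xi T_{s_0}$, $w=e_\xi T_\omega$, where $\omega$ is the image of $\begin{psmallmatrix}0&\varpi\\1&0\end{psmallmatrix}$ and $s_0=\begin{psmallmatrix}0&1\\1&0\end{psmallmatrix}$; a $k$-basis of $E$ is $1$, $(wt)^n$, $(tw)^n$, $w(tw)^{n-1}$, $t(wt)^{n-1}$ ($n\ge1$). *)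

theory Defs
  imports "HOL-Analysis.Analysis" "HOL-Library.Poly_Mapping"
    "HOL-Computational_Algebra.Polynomial"
begin

datatype gen = Gt | Gw

text \<open>Words in the generators, a monoid under concatenation (written additively
  so that the library's convolution ring structure on finitely supported
  functions applies).\<close>
datatype word = Word "gen list"

fun word_list :: "word \<Rightarrow> gen list" where "word_list (Word xs) = xs"

instantiation word :: monoid_add
begin
definition zero_word_def: "0 = Word []"
definition plus_word_def: "u + v = Word (word_list u @ word_list v)"
instance
proof
  fix a b c :: word
  show "a + b + c = a + (b + c)" by (cases a; cases b; cases c) (simp add: plus_word_def)
  show "0 + a = a" by (cases a) (simp add: plus_word_def zero_word_def)
  show "a + 0 = a" by (cases a) (simp add: plus_word_def zero_word_def)
qed
end

text \<open>The free associative k-algebra k<t,w>: finitely supported k-linear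
  combinations of words, with the convolution (concatenation) product.\<close>
type_synonym 'k freealg = "word \<Rightarrow>\<^sub>0 'k"

definition gen_t :: "'k::ring_1 freealg" where "gen_t = Poly_Mapping.single (Word [Gt]) 1"
definition gen_w :: "'k::ring_1 freealg" where "gen_w = Poly_Mapping.single (Word [Gw]) 1"

inductive_set rel_ideal :: "'k::ring_1 freealg set" where
  rel_t: "gen_t * gen_t + gen_t \<in> rel_ideal"
| rel_w: "gen_w * gen_w - 1 \<in> rel_ideal"
| zero: "0 \<in> rel_ideal"
| add: "x \<in> rel_ideal \<Longrightarrow> y \<in> rel_ideal \<Longrightarrow> x + y \<in> rel_ideal"
| mult: "x \<in> rel_ideal \<Longrightarrow> a * x * b \<in> rel_ideal"

text \<open>Equality in E = k<t,w>/(t^2+t, w^2-1).\<close>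
definition E_eq :: "'k::ring_1 freealg \<Rightarrow> 'k freealg \<Rightarrow> bool" where
  "E_eq f g \<longleftrightarrow> f - g \<in> rel_ideal"

definition E_centre :: "'k::ring_1 freealg set" where
  "E_centre = {f. \<forall>g. E_eq (f * g) (g * f)}"

definition matW :: "'k::comm_ring_1 poly ^ 2 ^ 2" where
  "matW = vector [vector [[:0, 1:], [:0, 1:]^2 - 1], vector [-1, -[:0, 1:]]]"

definition matT :: "'k::comm_ring_1 poly ^ 2 ^ 2" where
  "matT = vector [vector [0, 0], vector [0, -1]]"

fun gen_mat :: "gen \<Rightarrow> 'k::comm_ring_1 poly ^ 2 ^ 2" where
  "gen_mat Gt = matT"
| "gen_mat Gw = matW"

definition word_mat :: "word \<Rightarrow> 'k::comm_ring_1 poly ^ 2 ^ 2" where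
  "word_mat u = foldr (\<lambda>g M. gen_mat g ** M) (word_list u) (mat 1)"

definition phi :: "'k::comm_ring_1 freealg \<Rightarrow> 'k poly ^ 2 ^ 2" where
  "phi f = (\<Sum>u\<in>Poly_Mapping.keys f. mat [:Poly_Mapping.lookup f u:] ** word_mat u)"

end

theory Submission
  imports Defs
begin

definition m2 :: "'a::zero \<Rightarrow> 'a \<Rightarrow> 'a \<Rightarrow> 'a \<Rightarrow> 'a^2^2" where
  "m2 a b c d = vector [vector [a,b], vector [c,d]]"

lemma m2_nth: "m2 a b c d $ 1 $ 1 = a" "m2 a b c d $ 1 $ 2 = b"
  "m2 a b c d $ 2 $ 1 = c" "m2 a b c d $ 2 $ 2 = d"
  by (simp_all add: m2_def)

lemma m2_eta: "(M::'a::zero^2^2) = m2 (M$1$1) (M$1$2) (M$2$1) (M$2$2)"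
  by (simp add: vec_eq_iff forall_2 m2_nth)

lemma m2_eq: "m2 a b c d = m2 a' b' c' d' \<longleftrightarrow> a = a' \<and> b = b' \<and> c = c' \<and> d = d'"
  by (simp add: vec_eq_iff forall_2 m2_nth)

lemma m2_mult: "m2 a b c d ** m2 a' b' c' d' =
   m2 (a*a'+b*c') (a*b'+b*d') (c*a'+d*c') (c*b'+d*d'::'a::semiring_1)"
  by (simp add: vec_eq_iff forall_2 m2_nth matrix_matrix_mult_def sum_2)

lemma m2_add: "m2 a b c d + m2 a' b' c' d' = m2 (a+a') (b+b') (c+c') (d+d'::'a::monoid_add)"
  by (simp add: vec_eq_iff forall_2 m2_nth)

lemma m2_minus: "m2 a b c d - m2 a' b' c' d' = m2 (a-a') (b-b') (c-c') (d-d'::'a::group_add)"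
  by (simp add: vec_eq_iff forall_2 m2_nth)

lemma m2_uminus: "- m2 a b c d = m2 (-a) (-b) (-c) (-d::'a::group_add)"
  by (simp add: vec_eq_iff forall_2 m2_nth)

lemma m2_zero: "0 = (m2 0 0 0 0 :: 'a::zero^2^2)"
  by (simp add: vec_eq_iff forall_2 m2_nth)

lemma mat_m2: "mat x = (m2 x 0 0 x :: 'a::zero^2^2)"
  by (simp add: vec_eq_iff forall_2 m2_nth mat_def)

lemma matW_m2: "matW = m2 [:0,1:] ([:0,1:]^2 - 1) (-1) (-[:0,1:])"
  by (simp add: matW_def m2_def)

lemma matT_m2: "matT = m2 0 0 0 (-1)"
  by (simp add: matT_def m2_def)

lemma mat_add_rdistrib: "((A::'a::semiring_1^'n^'m) + B) ** C = A ** C + B ** C"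
  by (simp add: matrix_matrix_mult_def vec_eq_iff sum.distrib distrib_right)

lemma mat_add: "mat (a + b) = (mat a + mat b :: 'a::monoid_add^'n^'n)"
  by (simp add: mat_def vec_eq_iff)

lemma if_times_helper: "(if P then a else b) * (x::'a::semiring_0) = (if P then a * x else b * x)"
  by simp

lemma mat_mult_left_nth: "(mat c ** A) $ i $ j = c * (A $ i $ j :: 'a::semiring_1)"
proof -
  have "(mat c ** A) $ i $ j = (\<Sum>k\<in>UNIV. (if i = k then c else 0) * A $ k $ j)"
    by (simp add: matrix_matrix_mult_def mat_def)
  also have "\<dots> = (\<Sum>k\<in>UNIV. if k = i then c * A $ k $ j else 0)"
    by (rule sum.cong) auto
  finally show ?thesis by simp
qed

lemma mat_mult_right_nth: "(A ** mat c) $ i $ j = (A $ i $ j :: 'a::semiring_1) * c"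
  by (simp add: matrix_matrix_mult_def mat_def if_distrib cong: if_cong)

lemma mat_mult: "mat (a * b) = (mat a ** mat b :: 'a::semiring_1^'n^'n)"
  by (simp add: vec_eq_iff mat_mult_left_nth) (simp add: mat_def)

lemma mat_zero_mult: "(mat 0 :: 'a::semiring_1^'n^'n) ** A = 0"
  by (simp add: vec_eq_iff mat_mult_left_nth)

lemma mat_comm: "mat c ** A = A ** (mat c :: 'a::comm_semiring_1^'n^'n)"
  by (simp add: vec_eq_iff mat_mult_left_nth mat_mult_right_nth mult.commute)

lemma mat_sum: "finite S \<Longrightarrow> mat (sum f S) = (\<Sum>i\<in>S. mat (f i) :: 'a::comm_monoid_add^'n^'n)"
  by (induct S rule: finite_induct) (simp_all add: mat_def vec_eq_iff)

lemma mult_mzero: "(B::'a::semiring_1^'n^'m) ** (0::'a^'p^'n) = 0"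
  by (simp add: vec_eq_iff matrix_matrix_mult_def)

lemma msum_mult_left: "(sum f S) ** (B::'a::semiring_1^'n^'n) = (\<Sum>i\<in>S. f i ** B)"
  by (induct S rule: infinite_finite_induct) (simp_all add: mat_add_rdistrib mat_zero_mult[simplified mat_0])

lemma msum_mult_right: "(B::'a::semiring_1^'n^'m) ** (sum f S) = (\<Sum>i\<in>S. B ** f i)"
  by (induct S rule: infinite_finite_induct) (simp_all add: matrix_add_ldistrib mult_mzero)

lemma msum_product: "(sum f S) ** (sum g T) = (\<Sum>i\<in>S. \<Sum>j\<in>T. f i ** (g j::'a::semiring_1^'n^'n))"
proof -
  have "sum f S ** sum g T = (\<Sum>i\<in>S. f i ** sum g T)" by (rule msum_mult_left)
  also have "\<dots> = (\<Sum>i\<in>S. \<Sum>j\<in>T. f i ** g j)"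
    by (rule sum.cong[OF refl]) (rule msum_mult_right)
  finally show ?thesis .
qed

lemma word_mat_foldr: "foldr (\<lambda>g M. gen_mat g ** M) xs M0 =
   foldr (\<lambda>g M. gen_mat g ** M) xs (mat 1) ** (M0 :: 'k::comm_ring_1 poly^2^2)"
  by (induct xs) (simp_all add: matrix_mul_assoc)

lemma word_mat_add: "word_mat (u + v) = word_mat u ** (word_mat v :: 'k::comm_ring_1 poly^2^2)"
  by (cases u; cases v) (simp add: word_mat_def plus_word_def word_mat_foldr[of _ "foldr _ _ _"])

lemma word_mat_zero: "word_mat 0 = (mat 1 :: 'k::comm_ring_1 poly^2^2)"
  by (simp add: word_mat_def zero_word_def)

lemma pconst_add: "[:x + y:] = [:x:] + [:y::'a::comm_monoid_add:]"
  by simp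

lemma phi_superset:
  fixes f :: "'k::comm_ring_1 freealg"
  assumes "finite S" "Poly_Mapping.keys f \<subseteq> S"
  shows "phi f = (\<Sum>u\<in>S. mat [:Poly_Mapping.lookup f u:] ** word_mat u)"
  unfolding phi_def
  by (rule sum.mono_neutral_left) (use assms in \<open>auto simp: in_keys_iff mat_zero_mult[simplified mat_0]\<close>)

lemma phi_add: "phi (f + g) = phi f + phi (g :: 'k::comm_ring_1 freealg)"
proof -
  let ?S = "Poly_Mapping.keys f \<union> Poly_Mapping.keys g"
  have "phi (f + g) = (\<Sum>u\<in>?S. mat [:Poly_Mapping.lookup (f+g) u:] ** word_mat u)"
    by (rule phi_superset) (auto dest: keys_add[THEN subsetD])
  also have "\<dots> = (\<Sum>u\<in>?S. mat [:Poly_Mapping.lookup f u:] ** word_mat u)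
     + (\<Sum>u\<in>?S. mat [:Poly_Mapping.lookup g u:] ** word_mat u)"
    by (simp add: lookup_add pconst_add mat_add mat_add_rdistrib sum.distrib del: add_pCons)
  also have "\<dots> = phi f + phi g"
    by (simp add: phi_superset[symmetric])
  finally show ?thesis .
qed

lemma phi_zero: "phi (0 :: 'k::comm_ring_1 freealg) = 0"
  by (simp add: phi_def)

lemma phi_uminus: "phi (- f) = - phi (f :: 'k::comm_ring_1 freealg)"
  using phi_add[of f "-f"] by (simp add: phi_zero eq_neg_iff_add_eq_0 add.commute)

lemma phi_diff: "phi (f - g) = phi f - phi (g :: 'k::comm_ring_1 freealg)"
  using phi_add[of f "-g"] by (simp add: phi_uminus)

lemma phi_sum: "phi (sum h S) = (\<Sum>i\<in>S. phi (h i :: 'k::comm_ring_1 freealg))"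
  by (induct S rule: infinite_finite_induct) (simp_all add: phi_zero phi_add)

lemma phi_single: "phi (Poly_Mapping.single u c) = mat [:c:] ** (word_mat u :: 'k::comm_ring_1 poly^2^2)"
  by (simp add: phi_def mat_zero_mult[simplified mat_0])

lemma pm_expand: "(f::'a \<Rightarrow>\<^sub>0 'b::comm_monoid_add) =
   (\<Sum>u\<in>Poly_Mapping.keys f. Poly_Mapping.single u (Poly_Mapping.lookup f u))"
  by (rule poly_mapping_eqI) (simp add: lookup_sum lookup_single when_def in_keys_iff)

lemma phi_mult_single:
  "phi (Poly_Mapping.single u a * Poly_Mapping.single v b) =
   phi (Poly_Mapping.single u a) ** phi (Poly_Mapping.single v (b::'k::comm_ring_1))"
proof -
  have h: "mat [:a * b:] = (mat [:a:] ** mat [:b:] :: 'k poly^2^2)"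
    proof -
    have "[:a:] * [:b:] = [:a * b:]" by (subst mult.commute[of a b]) simp
    then show ?thesis by (metis mat_mult)
  qed
  then have "phi (Poly_Mapping.single u a * Poly_Mapping.single v b) =
     mat [:a:] ** mat [:b:] ** (word_mat u ** word_mat v)"
    by (simp add: mult_single phi_single word_mat_add h)
  also have "\<dots> = mat [:a:] ** ((mat [:b:] ** word_mat u) ** word_mat v)"
    by (simp add: matrix_mul_assoc)
  also have "\<dots> = mat [:a:] ** ((word_mat u ** mat [:b:]) ** word_mat v)"
    by (simp only: mat_comm[of "[:b:]" "word_mat u"])
  also have "\<dots> = mat [:a:] ** (word_mat u ** (mat [:b:] ** word_mat v))"
    by (simp add: matrix_mul_assoc)
  finally show ?thesis by (simp add: phi_single matrix_mul_assoc)
qed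

lemma phi_mult: "phi (f * g) = phi f ** phi (g :: 'k::comm_ring_1 freealg)"
proof -
  have "phi (f * g) = phi ((\<Sum>u\<in>Poly_Mapping.keys f. Poly_Mapping.single u (Poly_Mapping.lookup f u)) *
     (\<Sum>v\<in>Poly_Mapping.keys g. Poly_Mapping.single v (Poly_Mapping.lookup g v)))"
    using pm_expand[of f] pm_expand[of g] by simp
  also have "\<dots> = (\<Sum>u\<in>Poly_Mapping.keys f. \<Sum>v\<in>Poly_Mapping.keys g.
      phi (Poly_Mapping.single u (Poly_Mapping.lookup f u)) ** phi (Poly_Mapping.single v (Poly_Mapping.lookup g v)))"
    by (simp add: sum_product phi_sum phi_mult_single)
  also have "\<dots> = phi (\<Sum>u\<in>Poly_Mapping.keys f. Poly_Mapping.single u (Poly_Mapping.lookup f u)) **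
     phi (\<Sum>v\<in>Poly_Mapping.keys g. Poly_Mapping.single v (Poly_Mapping.lookup g v))"
    by (simp add: phi_sum msum_product)
  finally show ?thesis using pm_expand[of f] pm_expand[of g] by simp
qed


section \<open>The ideal\<close>

lemma I_neg: "x \<in> rel_ideal \<Longrightarrow> - x \<in> rel_ideal"
  using rel_ideal.mult[of x "-1" 1] by simp

lemma I_diff: "x \<in> rel_ideal \<Longrightarrow> y \<in> rel_ideal \<Longrightarrow> x - y \<in> rel_ideal"
  using rel_ideal.add[of x "-y"] I_neg[of y] by simp

lemma I_lmult: "x \<in> rel_ideal \<Longrightarrow> a * x \<in> rel_ideal"
  using rel_ideal.mult[of x a 1] by simp

lemma I_rmult: "x \<in> rel_ideal \<Longrightarrow> x * b \<in> rel_ideal"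
  using rel_ideal.mult[of x 1 b] by simp

lemma I_sum: "(\<And>i. i \<in> S \<Longrightarrow> h i \<in> rel_ideal) \<Longrightarrow> sum h S \<in> rel_ideal"
  by (induct S rule: infinite_finite_induct) (auto intro: rel_ideal.zero rel_ideal.add)

lemma E_eq_refl: "E_eq x x"
  by (simp add: E_eq_def rel_ideal.zero)

lemma E_eq_sym: "E_eq x y \<Longrightarrow> E_eq y x"
  unfolding E_eq_def using I_neg by fastforce

lemma E_eq_trans: "E_eq x y \<Longrightarrow> E_eq y z \<Longrightarrow> E_eq x z"
  unfolding E_eq_def using rel_ideal.add by fastforce

lemma pconst_one: "[:1:] = (1::'a::comm_ring_1 poly)"
  by (simp add: one_pCons)

lemma phi_one: "phi (1 :: 'k::comm_ring_1 freealg) = mat 1"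
  using phi_single[of 0 "1::'k"] by (simp add: word_mat_zero pconst_one)

lemma phi_t: "phi (gen_t :: 'k::comm_ring_1 freealg) = matT"
  by (simp add: gen_t_def phi_single word_mat_def pconst_one)

lemma phi_w: "phi (gen_w :: 'k::comm_ring_1 freealg) = matW"
  by (simp add: gen_w_def phi_single word_mat_def pconst_one)

lemma phi_I: "x \<in> rel_ideal \<Longrightarrow> phi (x :: 'k::comm_ring_1 freealg) = 0"
proof (induct rule: rel_ideal.induct)
  case rel_t
  show ?case by (simp add: phi_add phi_mult phi_t matT_m2 m2_mult m2_add m2_zero[symmetric])
next
  case rel_w
  show ?case by (simp add: phi_diff phi_mult phi_one phi_w matW_m2 mat_m2 m2_mult m2_minus m2_eq
     m2_zero[symmetric] algebra_simps power2_eq_square)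
qed (simp_all add: phi_zero phi_add phi_mult mult_mzero mat_zero_mult[simplified mat_0])

lemma phi_E_eq: "E_eq f g \<Longrightarrow> phi f = phi (g :: 'k::comm_ring_1 freealg)"
  unfolding E_eq_def using phi_I[of "f - g"] by (simp add: phi_diff)


section \<open>The central element z and the polynomial embedding\<close>

definition zz :: "'k::comm_ring_1 freealg" where
  "zz = gen_w + gen_w * gen_t + gen_t * gen_w"

definition sc :: "'k::comm_ring_1 \<Rightarrow> 'k freealg" where
  "sc c = Poly_Mapping.single 0 c"

definition ev :: "'k::comm_ring_1 poly \<Rightarrow> 'k freealg" where
  "ev q = (\<Sum>i\<le>degree q. sc (coeff q i) * zz ^ i)"

lemma ev_bound:
  assumes "degree q \<le> n"
  shows "ev q = (\<Sum>i\<le>n. sc (coeff q i) * zz ^ i)"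
  unfolding ev_def
  by (rule sum.mono_neutral_left) (use assms in \<open>auto simp: sc_def coeff_eq_0\<close>)

lemma ev_add: "ev (p + q) = ev p + ev q"
proof -
  let ?n = "max (degree p) (degree q)"
  have "degree (p + q) \<le> ?n" by (rule degree_add_le) auto
  then show ?thesis
    by (simp add: ev_bound[of _ ?n] sc_def single_add distrib_right sum.distrib)
qed

lemma ev_uminus: "ev (- p) = - ev p"
  by (simp add: ev_def sc_def single_uminus sum_negf)

lemma ev_diff: "ev (p - q) = ev p - ev q"
  using ev_add[of p "-q"] by (simp add: ev_uminus)

lemma ev_zero: "ev 0 = 0"
  by (simp add: ev_def sc_def)

lemma ev_const: "ev [:c:] = sc c"
  by (simp add: ev_def)

lemma ev_shift: "ev (pCons 0 q) = ev q * zz"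
proof -
  have d: "degree (pCons 0 q) \<le> Suc (degree q)" by (simp add: degree_pCons_le)
  have "ev (pCons 0 q) = (\<Sum>i\<le>Suc (degree q). sc (coeff (pCons 0 q) i) * zz ^ i)"
    by (rule ev_bound[OF d])
  also have "\<dots> = (\<Sum>i\<le>degree q. sc (coeff q i) * zz ^ i * zz)"
    by (subst sum.atMost_Suc_shift) (simp add: sc_def mult.assoc power_commutes)
  also have "\<dots> = ev q * zz"
    by (simp add: ev_def sum_distrib_right)
  finally show ?thesis .
qed

lemma phi_zz: "phi (zz :: 'k::comm_ring_1 freealg) = mat [:0,1:]"
  by (simp add: zz_def phi_add phi_mult phi_t phi_w matT_m2 matW_m2 mat_m2 m2_mult m2_add m2_eq
     algebra_simps power2_eq_square)

lemma phi_sc: "phi (sc c :: 'k::comm_ring_1 freealg) = mat [:c:]"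
  by (simp add: sc_def phi_single word_mat_zero)

lemma phi_zz_pow: "phi (zz ^ i :: 'k::comm_ring_1 freealg) = mat ([:0,1:] ^ i)"
  by (induct i) (simp_all add: phi_one phi_mult phi_zz mat_mult[symmetric])

lemma phi_ev: "phi (ev q :: 'k::comm_ring_1 freealg) = mat q"
proof -
  have "phi (ev q) = (\<Sum>i\<le>degree q. mat (monom (coeff q i) i))"
    by (simp add: ev_def phi_sum phi_mult phi_sc phi_zz_pow mat_mult[symmetric] monom_altdef)
  also have "\<dots> = mat q"
    by (simp add: mat_sum[symmetric] poly_as_sum_of_monoms)
  finally show ?thesis .
qed

lemma sc_comm: "sc c * f = f * (sc c :: 'k::comm_ring_1 freealg)"
proof -
  have "sc c * f = (\<Sum>u\<in>Poly_Mapping.keys f. sc c * Poly_Mapping.single u (Poly_Mapping.lookup f u))"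
    by (subst pm_expand[of f]) (simp add: sum_distrib_left)
  also have "\<dots> = (\<Sum>u\<in>Poly_Mapping.keys f. Poly_Mapping.single u (Poly_Mapping.lookup f u) * sc c)"
    by (simp add: sc_def mult_single mult.commute)
  also have "\<dots> = f * sc c"
    by (subst (2) pm_expand[of f]) (simp add: sum_distrib_right)
  finally show ?thesis .
qed

lemma zz_t: "zz * gen_t - gen_t * (zz :: 'k::comm_ring_1 freealg) \<in> rel_ideal"
proof -
  have "zz * gen_t - gen_t * (zz :: 'k freealg) =
     gen_w * (gen_t * gen_t + gen_t) - (gen_t * gen_t + gen_t) * gen_w"
    by (simp add: zz_def algebra_simps)
  then show ?thesis by (simp add: I_diff I_lmult I_rmult rel_ideal.rel_t)
qed

lemma zz_w: "zz * gen_w - gen_w * (zz :: 'k::comm_ring_1 freealg) \<in> rel_ideal"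
proof -
  have "zz * gen_w - gen_w * (zz :: 'k freealg) =
     gen_t * (gen_w * gen_w - 1) - (gen_w * gen_w - 1) * gen_t"
    by (simp add: zz_def algebra_simps)
  then show ?thesis by (simp add: I_diff I_lmult I_rmult rel_ideal.rel_w)
qed

lemma comm_pow:
  assumes "zz * g - g * (zz :: 'k::comm_ring_1 freealg) \<in> rel_ideal"
  shows "zz ^ i * g - g * zz ^ i \<in> rel_ideal"
proof (induct i)
  case 0 then show ?case by (simp add: rel_ideal.zero)
next
  case (Suc i)
  have "zz ^ Suc i * g - g * zz ^ Suc i = zz * (zz ^ i * g - g * zz ^ i) + (zz * g - g * zz) * zz ^ i"
    by (simp add: algebra_simps)
  then show ?case using Suc assms by (simp add: rel_ideal.add I_lmult I_rmult)
qed

lemma comm_ev: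
  assumes "zz * g - g * (zz :: 'k::comm_ring_1 freealg) \<in> rel_ideal"
  shows "ev q * g - g * ev q \<in> rel_ideal"
proof -
  have "ev q * g - g * ev q = (\<Sum>i\<le>degree q. sc (coeff q i) * (zz ^ i * g - g * zz ^ i))"
  proof -
    have "ev q * g - g * ev q = (\<Sum>i\<le>degree q. sc (coeff q i) * zz ^ i * g - g * (sc (coeff q i) * zz ^ i))"
      by (simp add: ev_def sum_distrib_left sum_distrib_right sum_subtractf)
    also have "\<dots> = (\<Sum>i\<le>degree q. sc (coeff q i) * (zz ^ i * g - g * zz ^ i))"
    proof (rule sum.cong[OF refl])
      fix i
      have h: "g * (sc (coeff q i) * zz ^ i) = sc (coeff q i) * (g * zz ^ i)"
        by (simp only: mult.assoc[symmetric] sc_comm[of "coeff q i" g])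
      show "sc (coeff q i) * zz ^ i * g - g * (sc (coeff q i) * zz ^ i) =
        sc (coeff q i) * (zz ^ i * g - g * zz ^ i)"
        by (simp only: h right_diff_distrib mult.assoc)
    qed
    finally show ?thesis .
  qed
  then show ?thesis using comm_pow[OF assms] by (auto intro!: I_sum I_lmult)
qed

lemma comm_ev_t: "gen_t * ev q - ev q * gen_t \<in> rel_ideal"
  using I_neg[OF comm_ev[OF zz_t, of q]] by simp

lemma comm_ev_w: "gen_w * ev q - ev q * gen_w \<in> rel_ideal"
  using I_neg[OF comm_ev[OF zz_w, of q]] by simp


section \<open>Spanning\<close>

definition NN :: "'k::comm_ring_1 poly \<Rightarrow> 'k poly \<Rightarrow> 'k poly \<Rightarrow> 'k poly \<Rightarrow> 'k freealg" where
  "NN a b c d = ev a + ev b * gen_t + ev c * gen_w + ev d * gen_w * gen_t"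

lemma NN_t: "gen_t * NN a b c d - NN (pCons 0 c) (a - b + pCons 0 d) (-c) (-c) \<in> rel_ideal"
proof -
  let ?t = "gen_t :: 'k::comm_ring_1 freealg" and ?w = "gen_w :: 'k freealg"
  have "gen_t * NN a b c d - NN (pCons 0 c) (a - b + pCons 0 d) (-c) (-c) =
     (?t * ev a - ev a * ?t) + (?t * ev b - ev b * ?t) * ?t + ev b * (?t * ?t + ?t)
     + (?t * ev c - ev c * ?t) * ?w + (?t * ev d - ev d * ?t) * ?w * ?t - ev d * ?w * (?t * ?t + ?t)"
    by (simp add: NN_def ev_shift ev_add ev_diff ev_uminus zz_def algebra_simps)
  then show ?thesis
    by (simp add: I_diff rel_ideal.add I_lmult I_rmult rel_ideal.rel_t comm_ev_t)
qed

lemma NN_w: "gen_w * NN a b c d - NN c d a b \<in> rel_ideal"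
proof -
  let ?t = "gen_t :: 'k::comm_ring_1 freealg" and ?w = "gen_w :: 'k freealg"
  have "gen_w * NN a b c d - NN c d a b =
     (?w * ev a - ev a * ?w) + (?w * ev b - ev b * ?w) * ?t + (?w * ev c - ev c * ?w) * ?w
     + ev c * (?w * ?w - 1) + (?w * ev d - ev d * ?w) * ?w * ?t + ev d * (?w * ?w - 1) * ?t"
    by (simp add: NN_def algebra_simps)
  then show ?thesis
    by (simp add: I_diff rel_ideal.add I_lmult I_rmult rel_ideal.rel_w comm_ev_w)
qed

definition SP :: "'k::comm_ring_1 freealg \<Rightarrow> bool" where
  "SP f \<longleftrightarrow> (\<exists>a b c d. f - NN a b c d \<in> rel_ideal)"

lemma NN_add: "NN a b c d + NN a' b' c' d' = NN (a + a') (b + b') (c + c') (d + d')"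
  by (simp add: NN_def ev_add algebra_simps)

lemma NN_zero: "NN 0 0 0 0 = 0"
  by (simp add: NN_def ev_zero)

lemma SP_add: "SP f \<Longrightarrow> SP g \<Longrightarrow> SP (f + g)"
proof -
  assume "SP f" "SP g"
  then obtain a b c d a' b' c' d' where h: "f - NN a b c d \<in> rel_ideal" "g - NN a' b' c' d' \<in> rel_ideal"
    unfolding SP_def by blast
  have "f + g - NN (a + a') (b + b') (c + c') (d + d') = (f - NN a b c d) + (g - NN a' b' c' d')"
    by (simp add: NN_add[symmetric] algebra_simps)
  then show "SP (f + g)" unfolding SP_def using h rel_ideal.add by metis
qed

lemma SP_zero: "SP 0"
proof -
  have "0 - NN 0 0 0 0 \<in> rel_ideal" by (simp add: NN_zero rel_ideal.zero)
  then show ?thesis unfolding SP_def by blast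
qed

lemma SP_sum: "(\<And>i. i \<in> S \<Longrightarrow> SP (h i)) \<Longrightarrow> SP (sum h S)"
proof (induct S rule: infinite_finite_induct)
  case (infinite S) then show ?case by (simp add: SP_zero)
next
  case empty then show ?case by (simp add: SP_zero)
next
  case (insert x F) then show ?case by (simp add: SP_add)
qed

lemma SP_t: "SP f \<Longrightarrow> SP (gen_t * f)"
proof -
  assume "SP f"
  then obtain a b c d where h: "f - NN a b c d \<in> rel_ideal" unfolding SP_def by blast
  have "gen_t * f - NN (pCons 0 c) (a - b + pCons 0 d) (-c) (-c) =
     gen_t * (f - NN a b c d) + (gen_t * NN a b c d - NN (pCons 0 c) (a - b + pCons 0 d) (-c) (-c))"
    by (simp add: algebra_simps)
  then show ?thesis unfolding SP_def using h NN_t I_lmult rel_ideal.add by metis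
qed

lemma SP_w: "SP f \<Longrightarrow> SP (gen_w * f)"
proof -
  assume "SP f"
  then obtain a b c d where h: "f - NN a b c d \<in> rel_ideal" unfolding SP_def by blast
  have "gen_w * f - NN c d a b = gen_w * (f - NN a b c d) + (gen_w * NN a b c d - NN c d a b)"
    by (simp add: algebra_simps)
  then show ?thesis unfolding SP_def using h NN_w I_lmult rel_ideal.add by metis
qed

lemma SP_single_word: "SP (Poly_Mapping.single (Word xs) c :: 'k::comm_ring_1 freealg)"
proof (induct xs arbitrary: c)
  case Nil
  have "Poly_Mapping.single (Word []) c = (NN [:c:] 0 0 0 :: 'k freealg)"
    by (simp add: NN_def ev_const ev_zero sc_def zero_word_def)
  then show ?case unfolding SP_def by (metis diff_self rel_ideal.zero)
next
  case (Cons g xs)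
  have e: "Poly_Mapping.single (Word (g # xs)) c =
     Poly_Mapping.single (Word [g]) 1 * (Poly_Mapping.single (Word xs) c :: 'k freealg)"
    by (simp add: mult_single plus_word_def)
  show ?case
  proof (cases g)
    case Gt then show ?thesis using e SP_t[OF Cons] by (simp add: gen_t_def)
  next
    case Gw then show ?thesis using e SP_w[OF Cons] by (simp add: gen_w_def)
  qed
qed

lemma SP_all: "SP (f :: 'k::comm_ring_1 freealg)"
proof -
  have "\<And>u c. SP (Poly_Mapping.single u c :: 'k freealg)"
    by (metis SP_single_word word_list.cases)
  then show ?thesis by (subst pm_expand) (rule SP_sum)
qed


section \<open>Injectivity and the centre\<close>

lemma phi_NN: "phi (NN a b c d :: 'k::comm_ring_1 freealg) =
   m2 (a + c * [:0,1:]) ((c - d) * ([:0,1:]^2 - 1)) (-c) (a - b - c * [:0,1:] + d * [:0,1:])"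
  by (simp add: NN_def phi_add phi_mult phi_ev phi_t phi_w matT_m2 matW_m2 mat_m2 m2_mult m2_add m2_eq
     algebra_simps)

lemma X2m1_nz: "([:0,1:]^2 - 1 :: 'k::idom poly) \<noteq> 0"
proof
  assume "([:0,1:]^2 - 1 :: 'k poly) = 0"
  then have "poly ([:0,1:]^2 - 1 :: 'k poly) 0 = 0" by simp
  then show False by simp
qed

lemma phi_NN_zero:
  assumes "phi (NN a b c d :: 'k::idom freealg) = 0"
  shows "a = 0 \<and> b = 0 \<and> c = 0 \<and> d = 0"
proof -
  from assms have e: "a + c * [:0,1:] = 0" "(c - d) * ([:0,1:]^2 - 1) = 0" "-c = 0"
     "a - b - c * [:0,1:] + d * [:0,1:] = 0"
    by (simp_all only: phi_NN m2_zero m2_eq)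
  from e(3) have c: "c = 0" by simp
  with e(1) have a: "a = 0" by simp
  from e(2) c X2m1_nz[where 'k='k] have d: "d = 0" by auto
  from e(4) a c d have "b = 0" by simp
  with a c d show ?thesis by simp
qed

lemma phi_inj:
  assumes "phi f = phi (g :: 'k::idom freealg)"
  shows "E_eq f g"
proof -
  obtain a b c d where h: "(f - g) - NN a b c d \<in> rel_ideal"
    using SP_all[of "f - g"] unfolding SP_def by blast
  have "phi ((f - g) - NN a b c d) = 0" by (rule phi_I[OF h])
  then have "phi (NN a b c d) = 0" using assms by (simp add: phi_diff)
  then have "a = 0 \<and> b = 0 \<and> c = 0 \<and> d = 0" by (rule phi_NN_zero)
  with h show ?thesis by (simp add: E_eq_def NN_zero)
qed

lemma centre_sub:
  assumes "(f :: 'k::idom freealg) \<in> E_centre"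
  shows "\<exists>c. phi f = mat c"
proof -
  have "E_eq (f * gen_t) (gen_t * f)" "E_eq (f * gen_w) (gen_w * f)"
    using assms by (auto simp: E_centre_def)
  then have e: "phi f ** matT = matT ** phi f" "phi f ** matW = matW ** phi f"
    by (auto dest!: phi_E_eq simp: phi_mult phi_t phi_w)
  obtain p q r s where pf: "phi f = m2 p q r s" by (metis m2_eta)
  from e(1) have "q = 0" "r = 0" by (simp_all add: pf matT_m2 m2_mult m2_eq)
  with e(2) have "s = p" by (simp add: pf matW_m2 m2_mult m2_eq)
  with pf \<open>q = 0\<close> \<open>r = 0\<close> have "phi f = mat p" by (simp add: mat_m2)
  then show ?thesis ..
qed

lemma centre_sup: "ev c \<in> (E_centre :: 'k::idom freealg set)"
  unfolding E_centre_def
proof (intro CollectI allI phi_inj)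
  fix g :: "'k freealg"
  show "phi (ev c * g) = phi (g * ev c)"
    by (simp add: phi_mult phi_ev mat_comm[of c "phi g"])
qed

theorem proposition3p8:
  fixes p :: nat
  assumes "prime p" and "CHAR('k::field) = p"
    and "\<forall>q :: 'k poly. degree q > 0 \<longrightarrow> (\<exists>x. poly q x = 0)"
    and "\<forall>x :: 'k. \<exists>q :: 'k poly. q \<noteq> 0 \<and> (\<forall>i. coeff q i \<in> range of_int) \<and> poly q x = 0"
  shows "(\<forall>f g :: 'k freealg. phi (f * g) = phi f ** phi g)
    \<and> (\<forall>f g :: 'k freealg. E_eq f g \<longrightarrow> phi f = phi g)
    \<and> (\<forall>f g :: 'k freealg. phi f = phi g \<longrightarrow> E_eq f g)
    \<and> phi ` (E_centre :: 'k freealg set) = {mat c | c :: 'k poly. True}"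
proof -
  have 1: "\<forall>f g :: 'k freealg. phi (f * g) = phi f ** phi g" by (simp add: phi_mult)
  have 2: "\<forall>f g :: 'k freealg. E_eq f g \<longrightarrow> phi f = phi g" using phi_E_eq by blast
  have 3: "\<forall>f g :: 'k freealg. phi f = phi g \<longrightarrow> E_eq f g" using phi_inj by blast
  have 4: "phi ` (E_centre :: 'k freealg set) = {mat c | c :: 'k poly. True}"
  proof
    show "phi ` (E_centre :: 'k freealg set) \<subseteq> {mat c | c :: 'k poly. True}"
      using centre_sub by blast
    show "{mat c | c :: 'k poly. True} \<subseteq> phi ` (E_centre :: 'k freealg set)"
    proof
      fix M :: "'k poly^2^2" assume "M \<in> {mat c | c :: 'k poly. True}"
      then obtain c where "M = mat c" by blast
      then have "M = phi (ev c :: 'k freealg)" by (simp add: phi_ev)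
      then show "M \<in> phi ` (E_centre :: 'k freealg set)" using centre_sup by blast
    qed
  qed
  show ?thesis using 1 2 3 4 by blast
qed

end
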